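(* If $C$ is a free $E$-linear code of length $2n$, then $SHull(C)$ is also free.
   Context: $E=\langle \kappa,\tau \mid 2\kappa=2\tau=0,\ \kappa^2=\kappa,\ \tau^2=\tau,\ \kappa\tau=\kappa,\ \tau\kappa=\tau\rangle$ is the non-unital ring $\{0,\kappa,\tau,\zeta\}$, $\zeta=\kappa+\tau$, with $e\kappa=e\tau=e$, $e\zeta=0$ for all $e\in E$. Every $e\in E$ is uniquely $u\kappa+v\zeta$ ($u,v\in\mathbb{F}_2$); $\pi(u\kappa+v\zeta)=u$, componentwise. An $E$-linear code of length $2n$ is a left $E$-submodule $C\subseteq E^{2n}$; $C_{Res}=\pi(C)$, $C_{Tor}=\{v\in\mathbb{F}_2^{2n}:\zeta v\in C\}$ (componentwise, $0\cdot\zeta=0,1\cdot\zeta=\zeta$); $C$ is free if $C_{Res}=C_{Tor}$. Symplectic inner product: $\langle (u|v),(u'|v')\rangle_s=\sum_i u_iv'_i+\sum_i v_iu'_i$. $C^{\perp_S}=\{z\in E^{2n}:\langle z,w\rangle_s=\langle w,z\rangle_s=0\ \forall w\in C\}$, $SHull(C)=C\cap C^{\perp_S}$. *)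

theory Defs
  imports Main
begin

text \<open>The four-element non-unital ring E = {0, kappa, tau, zeta}, zeta = kappa + tau,
  characteristic 2, with e*kappa = e*tau = e and e*zeta = 0 for all e.\<close>

datatype E = EZero | Kap | Tau | Zeta

instantiation E :: comm_monoid_add
begin
definition zero_E :: E where "zero_E = EZero"
fun plus_E :: "E \<Rightarrow> E \<Rightarrow> E" where
  "plus_E EZero y = y"
| "plus_E x EZero = x"
| "plus_E Kap Kap = EZero"
| "plus_E Tau Tau = EZero"
| "plus_E Zeta Zeta = EZero"
| "plus_E Kap Tau = Zeta"
| "plus_E Tau Kap = Zeta"
| "plus_E Kap Zeta = Tau"
| "plus_E Zeta Kap = Tau"
| "plus_E Tau Zeta = Kap"
| "plus_E Zeta Tau = Kap"
instance
proof
  fix a b c :: E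
  show "a + b + c = a + (b + c)" by (cases a; cases b; cases c; simp)
  show "a + b = b + a" by (cases a; cases b; simp)
  show "0 + a = a" by (simp add: zero_E_def)
qed
end

instantiation E :: times
begin
fun times_E :: "E \<Rightarrow> E \<Rightarrow> E" where
  "times_E e Kap = e"
| "times_E e Tau = e"
| "times_E e Zeta = EZero"
| "times_E e EZero = EZero"
instance ..
end

text \<open>Residue map pi(u kappa + v zeta) = u (kappa = 1 kappa + 0 zeta, tau = 1 kappa + 1 zeta).\<close>
fun piE :: "E \<Rightarrow> bool" where
  "piE EZero = False" | "piE Kap = True" | "piE Tau = True" | "piE Zeta = False"

text \<open>Vectors of length m over E (resp. F2 = bool): functions vanishing at indices \<ge> m.\<close>
definition Evecs :: "nat \<Rightarrow> (nat \<Rightarrow> E) set" where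
  "Evecs m = {x. \<forall>i\<ge>m. x i = 0}"

definition Fvecs :: "nat \<Rightarrow> (nat \<Rightarrow> bool) set" where
  "Fvecs m = {v. \<forall>i\<ge>m. \<not> v i}"

definition E_linear_code :: "nat \<Rightarrow> (nat \<Rightarrow> E) set \<Rightarrow> bool" where
  "E_linear_code n C \<longleftrightarrow> C \<subseteq> Evecs (2*n) \<and> (\<lambda>i. 0) \<in> C
     \<and> (\<forall>x\<in>C. \<forall>y\<in>C. (\<lambda>i. x i + y i) \<in> C)
     \<and> (\<forall>e::E. \<forall>x\<in>C. (\<lambda>i. e * x i) \<in> C)"

definition C_Res :: "(nat \<Rightarrow> E) set \<Rightarrow> (nat \<Rightarrow> bool) set" where
  "C_Res C = (\<lambda>x. \<lambda>i. piE (x i)) ` C"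

definition zeta_vec :: "(nat \<Rightarrow> bool) \<Rightarrow> (nat \<Rightarrow> E)" where
  "zeta_vec v = (\<lambda>i. if v i then Zeta else 0)"

definition C_Tor :: "nat \<Rightarrow> (nat \<Rightarrow> E) set \<Rightarrow> (nat \<Rightarrow> bool) set" where
  "C_Tor n C = {v \<in> Fvecs (2*n). zeta_vec v \<in> C}"

definition free_code :: "nat \<Rightarrow> (nat \<Rightarrow> E) set \<Rightarrow> bool" where
  "free_code n C \<longleftrightarrow> C_Res C = C_Tor n C"

text \<open>Symplectic inner product on E^(2n), x = (u|v): u = first n coordinates, v = last n.\<close>
definition symp :: "nat \<Rightarrow> (nat \<Rightarrow> E) \<Rightarrow> (nat \<Rightarrow> E) \<Rightarrow> E" where
  "symp n x y = (\<Sum>i<n. x i * y (n + i)) + (\<Sum>i<n. x (n + i) * y i)"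

definition symp_dual :: "nat \<Rightarrow> (nat \<Rightarrow> E) set \<Rightarrow> (nat \<Rightarrow> E) set" where
  "symp_dual n C = {z \<in> Evecs (2*n). \<forall>w\<in>C. symp n z w = 0 \<and> symp n w z = 0}"

definition SHull :: "nat \<Rightarrow> (nat \<Rightarrow> E) set \<Rightarrow> (nat \<Rightarrow> E) set" where
  "SHull n C = C \<inter> symp_dual n C"

end

theory Submission
  imports Defs
begin

lemma mulE: "(e::E) * a = (if piE a then e else 0)"
  by (cases a) (auto simp: zero_E_def)

lemma mul_add: "(e::E) * (a + b) = e * a + e * b"
  by (cases e; cases a; cases b; simp add: zero_E_def)

lemma add_mul: "((a::E) + b) * c = a * c + b * c"
  by (cases c; simp add: zero_E_def)

lemma mul_assoc: "((e::E) * a) * b = e * (a * b)"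
  by (cases a; cases b; simp add: zero_E_def)

lemma mul_zero: "(e::E) * 0 = 0"
  by (simp add: zero_E_def)

lemma mul_sum: "finite A \<Longrightarrow> (e::E) * (\<Sum>i\<in>A. f i) = (\<Sum>i\<in>A. e * f i)"
  by (induction A rule: finite_induct) (auto simp: mul_zero mul_add)

lemma sum_zero_E: "(\<Sum>i\<in>A. (0::E)) = 0" by simp

lemma symp_lmul: "symp n (\<lambda>i. e * x i) y = e * symp n x y"
  unfolding symp_def by (simp add: mul_add mul_sum mul_assoc)

lemma symp_add: "symp n (\<lambda>i. x i + x' i) y = symp n x y + symp n x' y"
  unfolding symp_def by (simp add: add_mul sum.distrib ac_simps)

lemma symp_pi: assumes "\<And>i. piE (y i) = piE (y' i)" shows "symp n x y = symp n x y'"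
  unfolding symp_def by (simp add: mulE assms)

lemma symp_zero: "symp n x (\<lambda>_. 0) = 0"
  unfolding symp_def by (simp add: mul_zero)

lemma kap_mul_mul: "Kap * ((a::E) * b) = (if piE a \<and> piE b then Kap else 0)"
  by (cases a; cases b; simp add: zero_E_def)

lemma symp_sym: "Kap * symp n x y = Kap * symp n y x"
  unfolding symp_def by (simp add: mul_add mul_sum kap_mul_mul conj_commute add.commute)

lemma zk: "Zeta * (a::E) = 0 \<Longrightarrow> Kap * a = 0"
  by (cases a; simp add: zero_E_def)
lemma kz: "Kap * (a::E) = 0 \<Longrightarrow> Zeta * a = 0"
  by (cases a; simp add: zero_E_def)

theorem mainTheorem15:
  fixes n :: nat and C :: "(nat \<Rightarrow> E) set"
  assumes "E_linear_code n C" and "free_code n C"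
  shows "free_code n (SHull n C)"
proof -
  have sub: "C \<subseteq> Evecs (2*n)" and add: "\<And>x y. x \<in> C \<Longrightarrow> y \<in> C \<Longrightarrow> (\<lambda>i. x i + y i) \<in> C"
    and smul: "\<And>e x. x \<in> C \<Longrightarrow> (\<lambda>i. e * x i) \<in> C"
    using assms(1) unfolding E_linear_code_def by auto
  have fr: "C_Res C = C_Tor n C" using assms(2) unfolding free_code_def .
  have zv: "zeta_vec (\<lambda>i. piE (x i)) = (\<lambda>i. Zeta * x i)" for x
    unfolding zeta_vec_def by (rule ext) (simp add: mulE)
  show ?thesis unfolding free_code_def
  proof
    show "C_Res (SHull n C) \<subseteq> C_Tor n (SHull n C)"
    proof
      fix v assume "v \<in> C_Res (SHull n C)"
      then obtain x where x: "x \<in> SHull n C" and v: "v = (\<lambda>i. piE (x i))"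
        unfolding C_Res_def by auto
      have xC: "x \<in> C" and xd: "\<And>w. w \<in> C \<Longrightarrow> symp n x w = 0 \<and> symp n w x = 0"
        using x unfolding SHull_def symp_dual_def by auto
      have xE: "x \<in> Evecs (2*n)" using xC sub by auto
      have "(\<lambda>i. Zeta * x i) \<in> C" using smul xC by blast
      moreover have "(\<lambda>i. Zeta * x i) \<in> Evecs (2*n)" using xE
        unfolding Evecs_def by (auto simp: mul_zero)
      moreover have "symp n (\<lambda>i. Zeta * x i) w = 0 \<and> symp n w (\<lambda>i. Zeta * x i) = 0" if "w \<in> C" for w
      proof
        show "symp n (\<lambda>i. Zeta * x i) w = 0" using xd[OF that] by (simp add: symp_lmul mul_zero)
        have "symp n w (\<lambda>i. Zeta * x i) = symp n w (\<lambda>_. 0)"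
          by (rule symp_pi) (simp add: mulE zero_E_def)
        then show "symp n w (\<lambda>i. Zeta * x i) = 0" by (simp add: symp_zero)
      qed
      ultimately have "(\<lambda>i. Zeta * x i) \<in> SHull n C"
        unfolding SHull_def symp_dual_def by auto
      moreover have "v \<in> Fvecs (2*n)" using xE unfolding v Evecs_def Fvecs_def
        by (auto simp: zero_E_def)
      ultimately show "v \<in> C_Tor n (SHull n C)" unfolding C_Tor_def v using zv[of x] by auto
    qed
  next
    show "C_Tor n (SHull n C) \<subseteq> C_Res (SHull n C)"
    proof
      fix v assume "v \<in> C_Tor n (SHull n C)"
      then have vF: "v \<in> Fvecs (2*n)" and zS: "zeta_vec v \<in> SHull n C"
        unfolding C_Tor_def by auto
      have "v \<in> C_Tor n C" using vF zS unfolding C_Tor_def SHull_def by auto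
      then obtain y where yC: "y \<in> C" and v: "v = (\<lambda>i. piE (y i))"
        using fr unfolding C_Res_def by auto
      have zd: "\<And>w. w \<in> C \<Longrightarrow> symp n (zeta_vec v) w = 0"
        using zS unfolding SHull_def symp_dual_def by auto
      have Z: "Zeta * symp n y w = 0" if "w \<in> C" for w
        using zd[OF that] unfolding v zv by (simp add: symp_lmul)
      have K: "Kap * symp n y w = 0" if "w \<in> C" for w using Z[OF that] by (rule zk)
      have K2: "Kap * symp n w y = 0" if "w \<in> C" for w using K[OF that] by (simp add: symp_sym)
      have Z2: "Zeta * symp n w y = 0" if "w \<in> C" for w using K2[OF that] by (rule kz)
      define x where "x = (\<lambda>i. Kap * y i)"
      have xC: "x \<in> C" unfolding x_def using smul yC by blast
      have xE: "x \<in> Evecs (2*n)" using xC sub by auto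
      have pix: "piE (x i) = piE (y i)" for i unfolding x_def by (simp add: mulE zero_E_def)
      have "symp n x w = 0 \<and> symp n w x = 0" if wC: "w \<in> C" for w
      proof
        show "symp n x w = 0" unfolding x_def using K[OF wC] by (simp add: symp_lmul)
        have wx: "symp n w x = symp n w y" by (rule symp_pi) (simp add: pix)
        define z where "z = (\<lambda>i. w i + Kap * w i)"
        have zC: "z \<in> C" unfolding z_def using add smul wC by blast
        have wE: "w \<in> Evecs (2*n)" using wC sub by auto
        define b where "b = (\<lambda>i. z i = Zeta)"
        have zb: "zeta_vec b = z" unfolding zeta_vec_def b_def z_def
        proof (rule ext)
          fix i show "(if w i + Kap * w i = Zeta then Zeta else 0) = w i + Kap * w i"
            by (cases "w i"; simp add: zero_E_def)
        qed
        have bF: "b \<in> Fvecs (2*n)" using wE unfolding Fvecs_def Evecs_def b_def z_def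
          by (auto simp: zero_E_def)
        have "b \<in> C_Tor n C" unfolding C_Tor_def using bF zb zC by auto
        then obtain y' where y'C: "y' \<in> C" and b: "b = (\<lambda>i. piE (y' i))"
          using fr unfolding C_Res_def by auto
        have zy: "z = (\<lambda>i. Zeta * y' i)" using zb unfolding b zv by simp
        have wdec: "w = (\<lambda>i. Kap * w i + Zeta * y' i)"
        proof (rule ext)
          fix i have "z i = w i + Kap * w i" unfolding z_def by simp
          then show "w i = Kap * w i + Zeta * y' i" unfolding zy
            by (cases "w i"; simp add: zero_E_def)
        qed
        have "symp n w y = Kap * symp n w y + Zeta * symp n y' y"
          by (subst wdec) (simp add: symp_add symp_lmul)
        also have "\<dots> = 0" using Z2[OF y'C] K[OF wC] symp_sym[of n w y]
          by (simp add: zero_E_def)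
        finally show "symp n w x = 0" using wx by simp
      qed
      then have "x \<in> SHull n C" using xC xE unfolding SHull_def symp_dual_def by auto
      moreover have "v = (\<lambda>i. piE (x i))" unfolding v using pix by simp
      ultimately show "v \<in> C_Res (SHull n C)" unfolding C_Res_def by auto
    qed
  qed
qed

end
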